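(* Let $m\ge2$ and $t\ge1$, and let $H=K_{1,m}$ with center $v$ and leaves $v_1,\dots,v_m$. Let $T_H=\{v_1,\dots,v_{m-1}\}$ and $(T_H)_t=\{u_i^s: 1\le i\le m-1,\ 0\le s\le t\}$. Then $(T_H)_t$ is both a minimum twin cover and a minimum size determining set of $\mu_t(H)$; in particular $\det(\mu_t(K_{1,m}))=(t+1)(m-1)$.
   Context: All graphs are finite and simple. For a graph $G$ with $V(G)=\{v_1,\dots,v_n\}$ and an integer $t\ge1$, the generalized Mycielskian $\mu_t(G)$ has vertex set $\{u_i^s: 1\le i\le n,\ 0\le s\le t\}\cup\{w\}$, where $u_i^0$ is identified with $v_i$. Its edges are: $u_i^0u_j^0$ for each edge $v_iv_j$ of $G$; $u_i^su_j^{s+1}$ and $u_j^su_i^{s+1}$ for each edge $v_iv_j$ of $G$ and each $0\le s<t$; and $u_i^tw$ for all $1\le i\le n$. A set $S\subseteq V(G)$ is a determining set for $G$ if the only automorphism of $G$ fixing every vertex of $S$ is the identity; $\det(G)$ is the minimum size of a determining set. Two vertices are twins if they have the same open neighborhood. A minimum twin cover of a graph is a subset of its vertices of minimum size that contains at least one vertex from every pair of distinct twin vertices. *)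

theory Defs
  imports Main
begin

definition simple_graph :: "'a set \<Rightarrow> 'a set set \<Rightarrow> bool" where
  "simple_graph V E \<longleftrightarrow> finite V \<and> (\<forall>e\<in>E. \<exists>x y. x \<in> V \<and> y \<in> V \<and> x \<noteq> y \<and> e = {x, y})"

definition automorphism :: "'a set \<times> 'a set set \<Rightarrow> ('a \<Rightarrow> 'a) \<Rightarrow> bool" where
  "automorphism G f \<longleftrightarrow> bij_betw f (fst G) (fst G) \<and>
     (\<forall>x\<in>fst G. \<forall>y\<in>fst G. {x, y} \<in> snd G \<longleftrightarrow> {f x, f y} \<in> snd G)"

definition determining_set :: "'a set \<times> 'a set set \<Rightarrow> 'a set \<Rightarrow> bool" where
  "determining_set G S \<longleftrightarrow> S \<subseteq> fst G \<and>
     (\<forall>f. automorphism G f \<and> (\<forall>x\<in>S. f x = x) \<longrightarrow> (\<forall>x\<in>fst G. f x = x))"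

definition min_determining_set :: "'a set \<times> 'a set set \<Rightarrow> 'a set \<Rightarrow> bool" where
  "min_determining_set G S \<longleftrightarrow> determining_set G S \<and>
     (\<forall>S'. determining_set G S' \<longrightarrow> card S \<le> card S')"

definition det :: "'a set \<times> 'a set set \<Rightarrow> nat" where
  "det G = (LEAST n. \<exists>S. determining_set G S \<and> card S = n)"

definition open_nbhd :: "'a set \<times> 'a set set \<Rightarrow> 'a \<Rightarrow> 'a set" where
  "open_nbhd G x = {y \<in> fst G. {x, y} \<in> snd G}"

definition twins :: "'a set \<times> 'a set set \<Rightarrow> 'a \<Rightarrow> 'a \<Rightarrow> bool" where
  "twins G x y \<longleftrightarrow> x \<in> fst G \<and> y \<in> fst G \<and> x \<noteq> y \<and> open_nbhd G x = open_nbhd G y"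

definition twin_cover :: "'a set \<times> 'a set set \<Rightarrow> 'a set \<Rightarrow> bool" where
  "twin_cover G S \<longleftrightarrow> S \<subseteq> fst G \<and> (\<forall>x y. twins G x y \<longrightarrow> x \<in> S \<or> y \<in> S)"

definition min_twin_cover :: "'a set \<times> 'a set set \<Rightarrow> 'a set \<Rightarrow> bool" where
  "min_twin_cover G S \<longleftrightarrow> twin_cover G S \<and>
     (\<forall>S'. twin_cover G S' \<longrightarrow> card S \<le> card S')"

text \<open>Generalized Mycielskian mu_t(G). Vertex Some (v, s) is u_v^s (with u_v^0 = v),
  and None is the root w.\<close>

definition mycielskian :: "nat \<Rightarrow> 'a set \<times> 'a set set \<Rightarrow> ('a \<times> nat) option set \<times> ('a \<times> nat) option set set" where
  "mycielskian t G =
    ( Some ` (fst G \<times> {0..t}) \<union> {None},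
      {{Some (x, 0), Some (y, 0)} | x y. {x, y} \<in> snd G}
      \<union> {{Some (x, s), Some (y, Suc s)} | x y s. {x, y} \<in> snd G \<and> s < t}
      \<union> {{Some (x, t), None} | x. x \<in> fst G} )"

definition star :: "nat \<Rightarrow> nat set \<times> nat set set" where
  "star m = ({0..m}, {{0, i} | i. i \<in> {1..m}})"

end

theory Submission imports Defs begin

definition sadj :: "nat \<Rightarrow> nat \<Rightarrow> nat \<Rightarrow> bool" where
  "sadj m x y \<longleftrightarrow> (x = 0 \<and> 1 \<le> y \<and> y \<le> m) \<or> (y = 0 \<and> 1 \<le> x \<and> x \<le> m)"

fun adj :: "nat \<Rightarrow> nat \<Rightarrow> (nat \<times> nat) option \<Rightarrow> (nat \<times> nat) option \<Rightarrow> bool" where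
  "adj m t (Some (x, s)) (Some (y, r)) = (sadj m x y \<and> (s = 0 \<and> r = 0 \<or> r = Suc s \<and> s < t \<or> s = Suc r \<and> r < t))"
| "adj m t (Some (x, s)) None = (x \<le> m \<and> s = t)"
| "adj m t None (Some (y, r)) = (y \<le> m \<and> r = t)"
| "adj m t None None = False"

lemma star_edge: "{x, y} \<in> snd (star m) \<longleftrightarrow> sadj m x y"
  unfolding star_def sadj_def by (auto simp: doubleton_eq_iff)

lemma edge_iff: "{a, b} \<in> snd (mycielskian t (star m)) \<longleftrightarrow> adj m t a b"
proof -
  have E: "snd (mycielskian t (star m)) =
      {{Some (x, 0), Some (y, 0)} | x y. {x, y} \<in> snd (star m)}
      \<union> {{Some (x, s), Some (y, Suc s)} | x y s. {x, y} \<in> snd (star m) \<and> s < t}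
      \<union> {{Some (x, t), None} | x. x \<in> fst (star m)}"
    unfolding mycielskian_def by simp
  have fs: "fst (star m) = {0..m}" unfolding star_def by simp
  have sym: "sadj m x y = sadj m y x" for x y unfolding sadj_def by auto
  show ?thesis
    unfolding E fs
    apply (cases a; cases b)
    apply (auto simp: doubleton_eq_iff star_edge)
    apply (metis sym)+
    done
qed

lemma adj_sym: "adj m t a b = adj m t b a"
proof -
  have sym: "sadj m x y = sadj m y x" for x y unfolding sadj_def by auto
  show ?thesis by (cases a; cases b) (auto simp: sym)
qed

definition lv :: "nat \<Rightarrow> nat \<Rightarrow> nat \<Rightarrow> bool" where
  "lv t s r \<longleftrightarrow> (s = 0 \<and> r = 0 \<or> r = Suc s \<and> s < t \<or> s = Suc r \<and> r < t)"

lemma lev_lt: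
  fixes s q t :: nat
  assumes "s < q" "q \<le> t"
    and H: "\<forall>r\<le>t. lv t s r = lv t q r"
  shows False
proof -
  have "lv t s (Suc s)" using assms unfolding lv_def by auto
  with H assms have "lv t q (Suc s)" by auto
  then have q: "q = Suc (Suc s)" using assms unfolding lv_def by auto
  show False
  proof (cases s)
    case 0
    have "lv t s 0" using 0 unfolding lv_def by auto
    with H have "lv t q 0" by auto
    then show False using q 0 unfolding lv_def by auto
  next
    case (Suc k)
    have "lv t s k" using Suc assms unfolding lv_def by auto
    with H assms Suc have "lv t q k" by auto
    then show False using q Suc unfolding lv_def by auto
  qed
qed

lemma lev_inj:
  fixes s q t :: nat
  assumes "s \<le> t" "q \<le> t"
    and H: "\<forall>r\<le>t. (s = 0 \<and> r = 0 \<or> r = Suc s \<and> s < t \<or> s = Suc r \<and> r < t)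
                  = (q = 0 \<and> r = 0 \<or> r = Suc q \<and> q < t \<or> q = Suc r \<and> r < t)"
  shows "s = q"
proof -
  have H': "\<forall>r\<le>t. lv t s r = lv t q r" using H unfolding lv_def by blast
  have H'': "\<forall>r\<le>t. lv t q r = lv t s r" using H' by auto
  show ?thesis
    using lev_lt[OF _ assms(2) H'] lev_lt[OF _ assms(1) H''] by (metis linorder_neqE_nat)
qed

lemma nonleaf_profile:
  assumes "m \<ge> 1" "t \<ge> 1"
    and v: "v = None \<or> (\<exists>s. s \<le> t \<and> v = Some (0, s))"
    and w: "w \<in> Some ` ({0..m} \<times> {0..t}) \<union> {None}"
    and H: "\<forall>r\<le>t. adj m t v (Some (1, r)) = adj m t w (Some (1, r))"
  shows "w = v"
proof -
  have pn: "adj m t None (Some (Suc 0, r)) \<longleftrightarrow> r = t" for r using assms(1) by simp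
  have pc: "adj m t (Some (0, s)) (Some (Suc 0, r)) \<longleftrightarrow> lv t s r" for s r
    using assms(1) by (simp add: sadj_def lv_def)
  have pl: "y \<noteq> 0 \<Longrightarrow> \<not> adj m t (Some (y, q)) (Some (Suc 0, r))" for y q r
    by (simp add: sadj_def)
  have Hr: "adj m t v (Some (Suc 0, r)) = adj m t w (Some (Suc 0, r))" if "r \<le> t" for r
    using H that by (simp del: adj.simps)
  show ?thesis
  proof (cases w)
    case None
    then show ?thesis
    proof (cases v)
      case (Some a)
      then obtain s where s: "s \<le> t" "v = Some (0, s)" using v by auto
      have c1: "lv t s (t - 2) = (t - 2 = t)" using Hr[of "t - 2"] s None by (simp add: pn pc del: adj.simps)
      have c2: "lv t s t" using Hr[of t] s None by (simp add: pn pc del: adj.simps)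
      show ?thesis using c1 c2 s assms(2) unfolding lv_def by auto
    qed simp
  next
    case (Some a)
    then obtain y q where w': "w = Some (y, q)" "y \<le> m" "q \<le> t" using w by auto
    show ?thesis
    proof (cases "y = 0")
      case False
      have "\<not> adj m t w (Some (Suc 0, r))" for r using pl[OF False, of q r] w'(1) by (simp del: adj.simps)
      moreover obtain r where r: "r \<le> t" "adj m t v (Some (Suc 0, r))"
      proof (cases v)
        case None
        then show ?thesis using that[of t] pn by (simp del: adj.simps)
      next
        case (Some b)
        then obtain s where s: "s \<le> t" "v = Some (0, s)" using v by auto
        have "lv t s (if s < t then Suc s else s - 1)" using s assms(2) unfolding lv_def by auto
        then show ?thesis using that[of "if s < t then Suc s else s - 1"] s pc by (auto simp del: adj.simps)
      qed
      ultimately show ?thesis using Hr[OF r(1)] r(2) by blast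
    next
      case True
      show ?thesis
      proof (cases v)
        case None
        have c1: "lv t q (t - 2) = (t - 2 = t)" using Hr[of "t - 2"] w' True None by (simp add: pn pc del: adj.simps)
        have c2: "lv t q t" using Hr[of t] w' True None by (simp add: pn pc del: adj.simps)
        show ?thesis using c1 c2 w' assms(2) unfolding lv_def by auto
      next
        case (Some b)
        then obtain s where s: "s \<le> t" "v = Some (0, s)" using v by auto
        have "\<forall>r\<le>t. lv t s r = lv t q r" using Hr s w' True by (simp add: pc del: adj.simps)
        then have "s = q" using lev_inj[OF s(1) w'(3)] unfolding lv_def by blast
        then show ?thesis using s w' True by simp
      qed
    qed
  qed
qed


lemma pair_count:
  assumes "finite A" "\<forall>x\<in>A. \<forall>y\<in>A. x \<noteq> y \<longrightarrow> x \<in> S \<or> y \<in> S"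
  shows "card A \<le> card (A \<inter> S) + 1"
proof -
  have "card (A - S) \<le> Suc 0"
    using assms by (subst card_le_Suc0_iff_eq) auto
  then show ?thesis using card_Int_Diff[OF assms(1), of S] by simp
qed

lemma count_lb:
  fixes S' :: "(nat \<times> nat) option set"
  assumes fin: "finite S'"
    and P: "\<forall>s\<le>t. \<forall>i\<in>{1..m}. \<forall>j\<in>{1..m}. i \<noteq> j \<longrightarrow> Some (i, s) \<in> S' \<or> Some (j, s) \<in> S'"
  shows "(t + 1) * (m - 1) \<le> card S'"
proof -
  define L where "L s = Some ` ({1..m} \<times> {s}) \<inter> S'" for s
  have cL: "m - 1 \<le> card (L s)" if "s \<le> t" for s
  proof -
    have "card (Some ` ({1..m} \<times> {s})) = m"
      by (subst card_image) (auto simp: card_cartesian_product)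
    moreover have "card (Some ` ({1..m} \<times> {s})) \<le> card (L s) + 1"
      unfolding L_def by (rule pair_count) (use P that in auto)
    ultimately show ?thesis by simp
  qed
  have "card (\<Union>(L ` {0..t})) = (\<Sum>s\<in>{0..t}. card (L s))"
    by (rule card_UN_disjoint) (auto simp: L_def fin)
  moreover have "(\<Sum>s\<in>{0..t}. m - 1) \<le> (\<Sum>s\<in>{0..t}. card (L s))"
    by (rule sum_mono) (metis atLeastAtMost_iff cL)
  moreover have "card (\<Union>(L ` {0..t})) \<le> card S'"
    by (rule card_mono[OF fin]) (auto simp: L_def)
  ultimately show ?thesis by simp
qed

definition sw :: "'a \<Rightarrow> 'a \<Rightarrow> 'a \<Rightarrow> 'a" where
  "sw a b z = (if z = a then b else if z = b then a else z)"

lemma sw_adj: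
  assumes A: "\<forall>z. P a z = P b z" and B: "\<forall>z. P z a = P z b"
  shows "P (sw a b x) (sw a b y) = P x y"
proof -
  have "P b b = P a a" "P a b = P b a" using A B by metis+
  then show ?thesis unfolding sw_def
    apply (cases "x = a"; cases "x = b"; cases "y = a"; cases "y = b")
    apply (simp_all only: if_True if_False)
    using A B by metis+
qed

lemma twin_leaf:
  assumes "1 \<le> i" "i \<le> m" "1 \<le> j" "j \<le> m"
  shows "adj m t (Some (i, s)) z = adj m t (Some (j, s)) z"
  using assms by (cases z) (auto simp: sadj_def split: prod.splits)

lemma fstG: "fst (mycielskian t (star m)) = Some ` ({0..m} \<times> {0..t}) \<union> {None}"
  unfolding mycielskian_def star_def by simp

lemma nbhd: "open_nbhd (mycielskian t (star m)) x = {y \<in> Some ` ({0..m} \<times> {0..t}) \<union> {None}. adj m t x y}"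
  unfolding open_nbhd_def fstG edge_iff ..


lemma classify:
  fixes m t :: nat
  assumes "x \<in> Some ` ({0..m} \<times> {0..t}) \<union> {None}"
  shows "x = None \<or> (\<exists>s. s \<le> t \<and> x = Some (0, s)) \<or>
         (\<exists>i s. 1 \<le> i \<and> i \<le> m - 1 \<and> s \<le> t \<and> x = Some (i, s)) \<or>
         (\<exists>s. s \<le> t \<and> x = Some (m, s))"
proof -
  { fix i s assume "x = Some (i, s)" "i \<le> m" "s \<le> t"
    have ?thesis
    proof (cases "i = 0 \<or> i = m")
      case True then show ?thesis using \<open>x = Some (i, s)\<close> \<open>s \<le> t\<close> by auto
    next
      case False
      then have "1 \<le> i \<and> i \<le> m - 1 \<and> s \<le> t \<and> x = Some (i, s)"
        using \<open>x = Some (i, s)\<close> \<open>s \<le> t\<close> \<open>i \<le> m\<close> by auto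
      then show ?thesis by blast
    qed }
  then show ?thesis using assms by auto
qed

lemma leaf_level:
  assumes "s \<le> t" "q \<le> t" "1 \<le> i" "1 \<le> j"
    and H: "\<forall>r\<le>t. adj m t (Some (0, r)) (Some (i, s)) = adj m t (Some (0, r)) (Some (j, q))"
    and "i \<le> m" "j \<le> m"
  shows "s = q"
proof (rule lev_inj[OF assms(1,2)], intro allI impI)
  fix r assume "r \<le> t"
  then show "(s = 0 \<and> r = 0 \<or> r = Suc s \<and> s < t \<or> s = Suc r \<and> r < t) =
        (q = 0 \<and> r = 0 \<or> r = Suc q \<and> q < t \<or> q = Suc r \<and> r < t)"
    using H assms by (auto simp: sadj_def)
qed

theorem mainTheorem11:
  fixes m t :: nat
  assumes "m \<ge> 2" and "t \<ge> 1"
  shows "min_twin_cover (mycielskian t (star m)) (Some ` ({1..m-1} \<times> {0..t}))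
       \<and> min_determining_set (mycielskian t (star m)) (Some ` ({1..m-1} \<times> {0..t}))
       \<and> det (mycielskian t (star m)) = (t + 1) * (m - 1)"
proof -
  define G where "G = mycielskian t (star m)"
  define V where "V = Some ` ({0..m} \<times> {0..t}) \<union> ({None} :: (nat \<times> nat) option set)"
  define S where "S = Some ` ({1..m-1} \<times> {0..t})"
  have fG: "fst G = V" unfolding G_def V_def fstG ..
  have eG: "{a, b} \<in> snd G \<longleftrightarrow> adj m t a b" for a b unfolding G_def edge_iff ..
  have finV: "finite V" unfolding V_def by simp
  have SV: "S \<subseteq> V" unfolding S_def V_def by auto
  have cardS: "card S = (t + 1) * (m - 1)"
    unfolding S_def by (subst card_image) (auto simp: card_cartesian_product)
  have m1: "m \<ge> 1" using assms by simp
  have leafV: "Some (i, s) \<in> V" if "i \<le> m" "s \<le> t" for i s using that unfolding V_def by auto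
  have leaf1S: "Some (Suc 0, r) \<in> S" if "r \<le> t" for r using that assms unfolding S_def by auto
  have notS: "x \<notin> S" if "x = None \<or> (\<exists>s. x = Some (0, s)) \<or> (\<exists>s. x = Some (m, s))" for x
    using that assms unfolding S_def by auto
  have tw: "twins G (Some (i, s)) (Some (j, s))"
    if "s \<le> t" "i \<in> {1..m}" "j \<in> {1..m}" "i \<noteq> j" for i j s
  proof -
    have "open_nbhd G (Some (i, s)) = open_nbhd G (Some (j, s))"
      unfolding G_def nbhd using twin_leaf[of i m j t s] that by auto
    then show ?thesis unfolding twins_def fG using that leafV by auto
  qed
  have swauto: "automorphism G (sw (Some (i, s)) (Some (j, s)))"
    if "s \<le> t" "i \<in> {1..m}" "j \<in> {1..m}" for i j s
  proof -
    let ?a = "Some (i, s)" and ?b = "Some (j, s)"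
    have aV: "?a \<in> V" "?b \<in> V" using that leafV by auto
    have A: "\<forall>z. adj m t ?a z = adj m t ?b z" using twin_leaf[of i m j t s] that by auto
    have B: "\<forall>z. adj m t z ?a = adj m t z ?b" using A adj_sym by metis
    have inv: "sw ?a ?b (sw ?a ?b z) = z" for z unfolding sw_def by auto
    have img: "sw ?a ?b ` V \<subseteq> V" using aV unfolding sw_def by auto
    have "bij_betw (sw ?a ?b) V V"
      by (rule bij_betw_byWitness[where f' = "sw ?a ?b"]) (use inv img in auto)
    moreover have "{x, y} \<in> snd G \<longleftrightarrow> {sw ?a ?b x, sw ?a ?b y} \<in> snd G" for x y
      unfolding eG using sw_adj[where P = "adj m t", OF A B] by metis
    ultimately show ?thesis unfolding automorphism_def fG by auto
  qed
  have lb_tc: "(t + 1) * (m - 1) \<le> card S'" if "twin_cover G S'" for S'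
  proof -
    have "S' \<subseteq> V" using that unfolding twin_cover_def fG by auto
    then have "finite S'" using finV finite_subset by blast
    then show ?thesis
      by (rule count_lb) (use that tw in \<open>auto simp: twin_cover_def\<close>)
  qed
  have lb_det: "(t + 1) * (m - 1) \<le> card S'" if dS: "determining_set G S'" for S'
  proof -
    have S'V: "S' \<subseteq> V" using that unfolding determining_set_def fG by auto
    then have "finite S'" using finV finite_subset by blast
    moreover have "\<forall>s\<le>t. \<forall>i\<in>{1..m}. \<forall>j\<in>{1..m}. i \<noteq> j \<longrightarrow> Some (i, s) \<in> S' \<or> Some (j, s) \<in> S'"
    proof (intro allI impI ballI, rule ccontr)
      fix s i j assume st: "s \<le> t" "i \<in> {1..m}" "j \<in> {1..m}" "i \<noteq> j"
        and n: "\<not> (Some (i, s) \<in> S' \<or> Some (j, s) \<in> S')"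
      let ?f = "sw (Some (i, s)) (Some (j, s))"
      have "\<forall>x\<in>S'. ?f x = x" using n unfolding sw_def by auto
      then have "\<forall>x\<in>V. ?f x = x" using dS swauto[OF st(1-3)] unfolding determining_set_def fG by blast
      moreover have "Some (i, s) \<in> V" using st leafV by auto
      ultimately show False using st(4) unfolding sw_def by auto
    qed
    ultimately show ?thesis by (rule count_lb)
  qed
  have tcS: "twin_cover G S"
    unfolding twin_cover_def
  proof (intro conjI allI impI)
    show "S \<subseteq> fst G" using SV fG by simp
    fix x y assume twxy: "twins G x y"
    then have xV: "x \<in> V" and yV: "y \<in> V" and xy: "x \<noteq> y"
      and nb0: "open_nbhd G x = open_nbhd G y"
      unfolding twins_def fG by auto
    have nb: "{z \<in> V. adj m t x z} = {z \<in> V. adj m t y z}"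
      using nb0 unfolding G_def nbhd V_def .
    have adjeq: "adj m t x z = adj m t y z" if "z \<in> V" for z using nb that by blast
    have p1: "\<forall>r\<le>t. adj m t x (Some (1, r)) = adj m t y (Some (1, r))"
      using adjeq leafV m1 by auto
    have p1': "\<forall>r\<le>t. adj m t y (Some (1, r)) = adj m t x (Some (1, r))"
      using p1 by auto
    show "x \<in> S \<or> y \<in> S"
    proof (rule ccontr)
      assume "\<not> (x \<in> S \<or> y \<in> S)"
      then have nx: "x \<notin> S" and ny: "y \<notin> S" by auto
      have cx: "x = None \<or> (\<exists>s. s \<le> t \<and> x = Some (0, s)) \<or> (\<exists>s. s \<le> t \<and> x = Some (m, s))"
        using classify[OF xV[unfolded V_def]] nx unfolding S_def by auto
      have cy: "y = None \<or> (\<exists>s. s \<le> t \<and> y = Some (0, s)) \<or> (\<exists>s. s \<le> t \<and> y = Some (m, s))"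
        using classify[OF yV[unfolded V_def]] ny unfolding S_def by auto
      show False
      proof (cases "x = None \<or> (\<exists>s. s \<le> t \<and> x = Some (0, s))")
        case True
        have "y = x" by (rule nonleaf_profile[OF m1 assms(2) True yV[unfolded V_def] p1])
        then show False using xy by simp
      next
        case False
        show False
        proof (cases "y = None \<or> (\<exists>s. s \<le> t \<and> y = Some (0, s))")
          case True
          have "x = y" by (rule nonleaf_profile[OF m1 assms(2) True xV[unfolded V_def] p1'])
          then show False using xy by simp
        next
          case False2: False
          obtain s where s: "s \<le> t" "x = Some (m, s)" using cx False by auto
          obtain q where q: "q \<le> t" "y = Some (m, q)" using cy False2 by auto
          have "\<forall>r\<le>t. adj m t (Some (0, r)) (Some (m, s)) = adj m t (Some (0, r)) (Some (m, q))"
            using adjeq leafV s q adj_sym by (metis le0)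
          then have "s = q" using leaf_level[OF s(1) q(1)] m1 by auto
          then show False using s q xy by simp
        qed
      qed
    qed
  qed
  have dS: "determining_set G S"
    unfolding determining_set_def
  proof (intro conjI allI impI)
    show "S \<subseteq> fst G" using SV fG by simp
    fix f assume fa: "automorphism G f \<and> (\<forall>x\<in>S. f x = x)"
    then have bij: "bij_betw f V V" and fxS: "\<forall>x\<in>S. f x = x"
      and fe: "\<forall>x\<in>V. \<forall>y\<in>V. adj m t x y = adj m t (f x) (f y)"
      unfolding automorphism_def fG eG by auto
    have fV: "f x \<in> V" if "x \<in> V" for x using bij_betw_apply[OF bij that] .
    have inj: "inj_on f V" using bij unfolding bij_betw_def by simp
    have nl: "f v = v" if vV: "v \<in> V" and vn: "v = None \<or> (\<exists>s. s \<le> t \<and> v = Some (0, s))" for v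
    proof -
      have "\<forall>r\<le>t. adj m t v (Some (1, r)) = adj m t (f v) (Some (1, r))"
      proof (intro allI impI)
        fix r assume r: "r \<le> t"
        have "adj m t v (Some (1, r)) = adj m t (f v) (f (Some (1, r)))"
          by (rule fe[rule_format, OF vV leafV[OF m1 r]])
        also have "f (Some (1, r)) = Some (1, r)" using fxS leaf1S[OF r] by simp
        finally show "adj m t v (Some (1, r)) = adj m t (f v) (Some (1, r))" .
      qed
      then show ?thesis by (rule nonleaf_profile[OF m1 assms(2) vn fV[OF vV, unfolded V_def]])
    qed
    have lm: "f (Some (m, s)) = Some (m, s)" if s: "s \<le> t" for s
    proof -
      let ?v = "Some (m, s)"
      have vV: "?v \<in> V" using leafV s by simp
      have wV: "f ?v \<in> V" using fV vV .
      note cw = classify[OF wV[unfolded V_def]]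
      have "\<not> (f ?v = None \<or> (\<exists>s. s \<le> t \<and> f ?v = Some (0, s)))"
      proof
        assume "f ?v = None \<or> (\<exists>s. s \<le> t \<and> f ?v = Some (0, s))"
        then have "f (f ?v) = f ?v" by (rule nl[OF wV])
        then have "f ?v = ?v" by (rule inj_onD[OF inj _ wV vV])
        then show False using \<open>f ?v = None \<or> (\<exists>s. s \<le> t \<and> f ?v = Some (0, s))\<close> assms by auto
      qed
      moreover have "\<not> (\<exists>i s. 1 \<le> i \<and> i \<le> m - 1 \<and> s \<le> t \<and> f ?v = Some (i, s))"
      proof
        assume "\<exists>i s. 1 \<le> i \<and> i \<le> m - 1 \<and> s \<le> t \<and> f ?v = Some (i, s)"
        then have "f ?v \<in> S" unfolding S_def by auto
        then have "f (f ?v) = f ?v" using fxS by blast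
        then have "f ?v = ?v" by (rule inj_onD[OF inj _ wV vV])
        then show False using \<open>f ?v \<in> S\<close> notS by auto
      qed
      ultimately obtain q where q: "q \<le> t" "f ?v = Some (m, q)" using cw by blast
      have "\<forall>r\<le>t. adj m t (Some (0, r)) (Some (m, s)) = adj m t (Some (0, r)) (Some (m, q))"
      proof (intro allI impI)
        fix r assume r: "r \<le> t"
        have cV: "Some (0, r) \<in> V" using leafV r by simp
        have "adj m t (Some (0, r)) ?v = adj m t (f (Some (0, r))) (f ?v)"
          by (rule fe[rule_format, OF cV vV])
        also have "f (Some (0, r)) = Some (0, r)" using nl cV r by blast
        finally show "adj m t (Some (0, r)) (Some (m, s)) = adj m t (Some (0, r)) (Some (m, q))"
          using q by simp
      qed
      then have "s = q" using leaf_level[OF s q(1)] m1 by auto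
      then show ?thesis using q by simp
    qed
    show "\<forall>x\<in>fst G. f x = x"
    proof
      fix x assume "x \<in> fst G"
      then have xV: "x \<in> V" using fG by simp
      from classify[OF xV[unfolded V_def]] show "f x = x"
      proof (elim disjE exE conjE)
        fix i s assume "1 \<le> i" "i \<le> m - 1" "s \<le> t" "x = Some (i, s)"
        then have "x \<in> S" unfolding S_def by auto
        then show ?thesis using fxS by blast
      next
        fix s assume "s \<le> t" "x = Some (m, s)"
        then show ?thesis using lm by simp
      next
        assume xn: "x = None"
        show ?thesis by (rule nl[OF xV]) (simp add: xn)
      next
        fix s assume xs: "s \<le> t" "x = Some (0, s)"
        show ?thesis by (rule nl[OF xV]) (use xs in blast)
      qed
    qed
  qed
  have "min_twin_cover G S" unfolding min_twin_cover_def using tcS lb_tc cardS by simp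
  moreover have "min_determining_set G S" unfolding min_determining_set_def using dS lb_det cardS by simp
  moreover have "det G = (t + 1) * (m - 1)"
    unfolding det_def
  proof (rule Least_equality)
    show "\<exists>S. determining_set G S \<and> card S = (t + 1) * (m - 1)" using dS cardS by blast
  next
    fix n assume "\<exists>S. determining_set G S \<and> card S = n"
    then show "(t + 1) * (m - 1) \<le> n" using lb_det by blast
  qed
  ultimately show ?thesis unfolding G_def S_def by simp
qed

end
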